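(* For each $x\in\mathcal I$ and any pair of randomized stopping times with conditional cumulative distribution functions $(\Gamma^1,\Gamma^2)$, $$J^1(x,\Gamma^1,\Gamma^2)\le\sup_{\tau^1\in\mathcal T}J^1(x,\tau^1,\Gamma^2),\qquad J^2(x,\Gamma^1,\Gamma^2)\le\sup_{\tau^2\in\mathcal T}J^2(x,\Gamma^1,\tau^2).$$
   Context: $\mathcal I=(\alpha,\beta)$, $X$ the coordinate process on the canonical space of continuous paths, $\mathbf P_x$ the law under which $X$ solves (weakly, uniquely in law) $\mathrm dX_t=b(X_t)\mathrm dt+\sigma(X_t)\mathrm dW_t$, $X_0=x$, with $b,\sigma$ continuous, $\sigma>0$, natural endpoints. $(\mathcal F_t)$ is the usual augmentation of the natural filtration of $X$, $\mathcal T$ its stopping times. $r>0$; $R^i,G^i$ continuous on $\mathcal I$ with $\mathbf E_x[\sup_te^{-rt}|R^i(X_t)|]<\infty$ and $\mathbf E_x[\sup_te^{-rt}|G^i(X_t)|]<\infty$; convention $f(X_\tau)=0$ on $\{\tau=\infty\}$. A randomized stopping time for player $i$ is an $\mathcal F\otimes\mathcal B([0,1])$-measurable $\gamma^i:\Omega\times[0,1]\to[0,\infty]$ with $\gamma^i(\cdot,u)\in\mathcal T$ for a.e. $u$; its conditional cdf is $\Gamma^i_t=\int_0^11_{\{\gamma^i(\cdot,u)\le t\}}\mathrm du$, $\Lambda^i=1-\Gamma^i$, $\Gamma^i_{0-}=0$; a pure stopping time $\tau\in\mathcal T$ has $\Gamma_t=1_{\{\tau\le t\}}$. Payoffs (with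 $j$ the other player): $J^i(x,\Gamma^1,\Gamma^2)=\mathbf E_x[\int_{[0,\infty)}e^{-rt}R^i(X_t)\Lambda^j_{t-}\mathrm d\Gamma^i_t+\int_{[0,\infty)}e^{-rt}G^i(X_t)\Lambda^i_t\mathrm d\Gamma^j_t]$. *)

theory Defs
  imports "HOL-Probability.Probability"
begin

text \<open>Time runs in ennreal = [0,\<infinity>]; a filtration is F :: ennreal \<Rightarrow> 'a measure and
  stopping times are the library's stopping_time F (values in [0,\<infinity>]).\<close>

definition randomized_stopping_time ::
  "(ennreal \<Rightarrow> 'a measure) \<Rightarrow> 'a measure \<Rightarrow> ('a \<Rightarrow> real \<Rightarrow> ennreal) \<Rightarrow> bool" where
  "randomized_stopping_time F M \<gamma> \<longleftrightarrow>
     (\<lambda>(\<omega>, u). \<gamma> \<omega> u) \<in> borel_measurable (M \<Otimes>\<^sub>M restrict_space borel {0..1::real}) \<and>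
     (AE u in restrict_space lborel {0..1::real}. stopping_time F (\<lambda>\<omega>. \<gamma> \<omega> u))"

text \<open>Conditional cdf Gamma_t(omega) = Leb{u in [0,1]. gamma(omega,u) \<le> t} for t \<ge> 0,
  and 0 for t < 0 (so that Gamma_{0-} = 0).\<close>
definition rst_cdf :: "('a \<Rightarrow> real \<Rightarrow> ennreal) \<Rightarrow> 'a \<Rightarrow> real \<Rightarrow> real" where
  "rst_cdf \<gamma> \<omega> t =
     (if t < 0 then 0 else measure lborel {u \<in> {0..1::real}. \<gamma> \<omega> u \<le> ennreal t})"

definition pure_cdf :: "('a \<Rightarrow> ennreal) \<Rightarrow> 'a \<Rightarrow> real \<Rightarrow> real" where
  "pure_cdf \<tau> \<omega> t = (if 0 \<le> t \<and> \<tau> \<omega> \<le> ennreal t then 1 else 0)"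

definition cdf_left :: "(real \<Rightarrow> real) \<Rightarrow> real \<Rightarrow> real" where
  "cdf_left \<Gamma> t = Lim (at_left t) \<Gamma>"

definition payoff ::
  "(real \<Rightarrow> 'a measure) \<Rightarrow> (real \<Rightarrow> 'a \<Rightarrow> real) \<Rightarrow> real \<Rightarrow> (real \<Rightarrow> real) \<Rightarrow> (real \<Rightarrow> real)
   \<Rightarrow> real \<Rightarrow> ('a \<Rightarrow> real \<Rightarrow> real) \<Rightarrow> ('a \<Rightarrow> real \<Rightarrow> real) \<Rightarrow> real" where
  "payoff P X r R G x Gi Gj =
     (\<integral>\<omega>. (set_lebesgue_integral (interval_measure (Gi \<omega>)) {0..}
              (\<lambda>t. exp (- r * t) * R (X t \<omega>) * (1 - cdf_left (Gj \<omega>) t)))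
          + (set_lebesgue_integral (interval_measure (Gj \<omega>)) {0..}
              (\<lambda>t. exp (- r * t) * G (X t \<omega>) * (1 - Gi \<omega> t))) \<partial>P x)"

end

theory Submission
  imports Defs
begin


abbreviation U01 :: "real measure" where "U01 \<equiv> restrict_space lborel {0..1::real}"

lemma space_U01[simp]: "space U01 = {0..1}"
  by (simp add: space_restrict_space)

lemma emeasure_U01_01[simp]: "emeasure U01 {0..1} = 1"
  apply (subst emeasure_restrict_space)
    apply simp_all
  done

lemma emeasure_U01_space: "emeasure U01 (space U01) = 1"
  by (subst space_U01) (rule emeasure_U01_01)

lemma U01_top[simp]: "{0..1::real} \<in> sets U01"
  using sets.top[of "restrict_space lborel {0..1::real}"] by (simp add: space_restrict_space)

lemma prob_space_U01: "prob_space U01"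
  by (rule prob_spaceI) (rule emeasure_U01_space)

lemma measure_U01: "{u \<in> {0..1}. P u} \<in> sets lborel \<Longrightarrow>
   measure U01 {u \<in> {0..1}. P u} = measure lborel {u \<in> {0..1}. P u}"
  by (rule measure_restrict_space) auto

definition cdfT :: "(real \<Rightarrow> ennreal) \<Rightarrow> real \<Rightarrow> real" where
  "cdfT T t = (if t < 0 then 0 else measure lborel {u \<in> {0..1::real}. T u \<le> ennreal t})"

lemma cdfT_U01: "T \<in> borel_measurable U01 \<Longrightarrow> 0 \<le> t \<Longrightarrow>
    cdfT T t = measure U01 {u \<in> space U01. T u \<le> ennreal t}"
proof -
  assume T[measurable]: "T \<in> borel_measurable U01" and t: "0 \<le> t"
  have "{u \<in> space U01. T u \<le> ennreal t} \<in> sets U01" by measurable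
  then have "{u \<in> {0..1}. T u \<le> ennreal t} \<in> sets lborel"
    by (simp add: sets_restrict_space_iff)
  then have "measure U01 {u \<in> {0..1}. T u \<le> ennreal t} = measure lborel {u \<in> {0..1}. T u \<le> ennreal t}"
    by (rule measure_U01)
  then show ?thesis using t unfolding cdfT_def by simp
qed

lemma pushforward:
  fixes T :: "real \<Rightarrow> ennreal" and f :: "real \<Rightarrow> real"
  assumes T[measurable]: "T \<in> borel_measurable U01" and f[measurable]: "f \<in> borel_measurable borel"
  shows "set_lebesgue_integral (interval_measure (cdfT T)) {0..} f
     = (\<integral>u. indicator {u. T u < \<infinity>} u * f (enn2real (T u)) \<partial>U01)"
proof -
  interpret U: prob_space U01 by (rule prob_space_U01)
  define D where "D = density U01 (\<lambda>u. ennreal (indicator {u. T u < \<infinity>} u))"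
  define \<nu> where "\<nu> = distr D borel (\<lambda>u. enn2real (T u))"
  have mT[measurable]: "{u \<in> space U01. T u < \<infinity>} \<in> sets U01" by measurable
  have sD[simp]: "sets D = sets U01" "space D = space U01" unfolding D_def by auto
  have mD: "(\<lambda>u. enn2real (T u)) \<in> measurable D borel" 
    by (simp add: measurable_cong_sets[OF sD(1) refl])
  have emD: "emeasure D A = emeasure U01 (A \<inter> {u \<in> space U01. T u < \<infinity>})" if "A \<in> sets U01" for A
  proof -
    have "emeasure D A = (\<integral>\<^sup>+u. ennreal (indicator {u. T u < \<infinity>} u) * indicator A u \<partial>U01)"
      unfolding D_def using that by (simp add: emeasure_density)
    also have "\<dots> = (\<integral>\<^sup>+u. indicator (A \<inter> {u \<in> space U01. T u < \<infinity>}) u \<partial>U01)"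
      by (intro nn_integral_cong) (auto split: split_indicator)
    also have "\<dots> = emeasure U01 (A \<inter> {u \<in> space U01. T u < \<infinity>})"
      by (rule nn_integral_indicator) (rule sets.Int[OF that mT])
    finally show ?thesis .
  qed
  have fin: "finite_measure \<nu>"
  proof
    have "emeasure \<nu> (space \<nu>) = emeasure D (space D)"
      unfolding \<nu>_def using mD by (simp add: emeasure_distr)
    also have "\<dots> = emeasure U01 (space U01 \<inter> {u \<in> space U01. T u < \<infinity>})"
      using emD[OF sets.top] by simp
    also have "\<dots> \<le> emeasure U01 (space U01)"
      by (rule emeasure_mono) auto
    finally show "emeasure \<nu> (space \<nu>) \<noteq> \<infinity>"
      using emeasure_U01_space by (auto simp: top_unique)
  qed
  have fbm: "finite_borel_measure \<nu>"
    unfolding finite_borel_measure_def finite_borel_measure_axioms_def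
    using fin by (simp add: \<nu>_def)
  have cdf_eq: "cdf \<nu> = cdfT T"
  proof
    fix t :: real
    have "emeasure \<nu> {..t} = emeasure D ((\<lambda>u. enn2real (T u)) -` {..t} \<inter> space D)"
      unfolding \<nu>_def using mD by (simp add: emeasure_distr)
    also have "\<dots> = emeasure U01 ({u \<in> {0..1}. T u \<le> ennreal t \<and> 0 \<le> t})"
    proof -
      have "(\<lambda>u. enn2real (T u)) -` {..t} \<inter> space D \<in> sets U01"
        using mD by (metis measurable_sets atMost_borel sD(1))
      moreover have "((\<lambda>u. enn2real (T u)) -` {..t} \<inter> space D) \<inter> {u \<in> space U01. T u < \<infinity>}
          = {u \<in> {0..1}. T u \<le> ennreal t \<and> 0 \<le> t}"
      proof (intro set_eqI iffI)
        fix u assume u: "u \<in> ((\<lambda>u. enn2real (T u)) -` {..t} \<inter> space D) \<inter> {u \<in> space U01. T u < \<infinity>}"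
        then have a: "enn2real (T u) \<le> t" "T u < \<top>" "u \<in> {0..1}" by auto
        then have t0: "0 \<le> t" using enn2real_nonneg[of "T u"] by linarith
        have "T u = ennreal (enn2real (T u))" using a(2) by simp
        also have "\<dots> \<le> ennreal t" using a(1) by (rule ennreal_leI)
        finally show "u \<in> {u \<in> {0..1}. T u \<le> ennreal t \<and> 0 \<le> t}" using a t0 by simp
      next
        fix u assume u: "u \<in> {u \<in> {0..1}. T u \<le> ennreal t \<and> 0 \<le> t}"
        then have a: "T u \<le> ennreal t" "0 \<le> t" "u \<in> {0..1}" by auto
        have "T u < \<top>" using a(1) ennreal_less_top[of t] by (rule le_less_trans)
        moreover have "enn2real (T u) \<le> t" using a(2,1) by (rule enn2real_leI)
        ultimately show "u \<in> ((\<lambda>u. enn2real (T u)) -` {..t} \<inter> space D) \<inter> {u \<in> space U01. T u < \<infinity>}"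
          using a(3) by simp
      qed
      ultimately show ?thesis using emD by simp
    qed
    finally have "measure \<nu> {..t} = measure U01 {u \<in> {0..1}. T u \<le> ennreal t \<and> 0 \<le> t}"
      by (simp add: measure_def)
    also have "\<dots> = cdfT T t"
    proof (cases "t < 0")
      case True then show ?thesis by (simp add: cdfT_def)
    next
      case False
      then show ?thesis using cdfT_U01[OF T, of t] by simp
    qed
    finally show "cdf \<nu> t = cdfT T t" by (simp add: cdf_def)
  qed
  have nu_eq: "interval_measure (cdfT T) = \<nu>"
  proof -
    interpret fb: finite_borel_measure \<nu> by (rule fbm)
    have A: "finite_borel_measure (interval_measure (cdf \<nu>))"
      by (rule finite_borel_measure_interval_measure[OF fb.cdf_nondecreasing fb.cdf_is_right_cont
            fb.cdf_lim_at_bot fb.cdf_lim_at_top]) (auto simp: measure_nonneg)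
    have B: "cdf (interval_measure (cdf \<nu>)) = cdf \<nu>"
      by (rule cdf_interval_measure[OF fb.cdf_nondecreasing fb.cdf_is_right_cont fb.cdf_lim_at_bot])
    have "interval_measure (cdf \<nu>) = \<nu>"
      by (rule cdf_unique'[OF A fbm B])
    then show ?thesis using cdf_eq by simp
  qed
  have "set_lebesgue_integral (interval_measure (cdfT T)) {0..} f
      = (\<integral>t. indicator {0..} t *\<^sub>R f t \<partial>\<nu>)"
    unfolding nu_eq set_lebesgue_integral_def ..
  also have "\<dots> = (\<integral>u. indicator {0..} (enn2real (T u)) *\<^sub>R f (enn2real (T u)) \<partial>D)"
    unfolding \<nu>_def by (rule integral_distr[OF mD]) measurable
  also have "\<dots> = (\<integral>u. indicator {u. T u < \<infinity>} u *\<^sub>R (indicator {0..} (enn2real (T u)) *\<^sub>R f (enn2real (T u))) \<partial>U01)"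
    unfolding D_def by (rule integral_density) (auto simp: measurable_cong_sets[OF sD(1) refl])
  also have "\<dots> = (\<integral>u. indicator {u. T u < \<infinity>} u * f (enn2real (T u)) \<partial>U01)"
    by (intro Bochner_Integration.integral_cong) (auto simp: indicator_def)
  finally show ?thesis .
qed

lemma cdf_left_cdfT:
  assumes T[measurable]: "T \<in> borel_measurable U01"
  shows "cdf_left (cdfT T) t = measure U01 {u \<in> space U01. T u < ennreal t}"
proof -
  interpret U: prob_space U01 by (rule prob_space_U01)
  define L where "L = measure U01 {u \<in> space U01. T u < ennreal t}"
  have "(cdfT T \<longlongrightarrow> L) (at_left t)"
  proof (cases "t \<le> 0")
    case True
    then have "ennreal t = 0" by (simp add: ennreal_eq_0_iff)
    then have "L = 0" unfolding L_def by simp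
    moreover have "eventually (\<lambda>s. s \<in> {t - 1<..<t}) (at_left t)"
      by (rule eventually_at_left_real) simp
    then have "eventually (\<lambda>s. cdfT T s = 0) (at_left t)"
      by eventually_elim (use True in \<open>auto simp: cdfT_def\<close>)
    ultimately show ?thesis by (simp add: tendsto_eventually)
  next
    case False
    then have t0: "0 < t" by simp
    define A where "A n = {u \<in> space U01. T u \<le> ennreal (t - 1 / Suc n)}" for n :: nat
    have Ameas: "A n \<in> sets U01" for n unfolding A_def by measurable
    have le: "ennreal (t - 1 / Suc m) \<le> ennreal (t - 1 / Suc n)" if "m \<le> n" for m n :: nat
      using that by (intro ennreal_leI diff_left_mono) (simp add: divide_simps)
    have inc: "incseq A"
      unfolding incseq_def A_def
    proof (intro allI impI subsetI)
      fix m n :: nat and u assume mn: "m \<le> n" and u: "u \<in> {u \<in> space U01. T u \<le> ennreal (t - 1 / Suc m)}"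
      then show "u \<in> {u \<in> space U01. T u \<le> ennreal (t - 1 / Suc n)}"
        using order.trans[OF _ le[OF mn]] by blast
    qed
    have UA: "(\<Union>n. A n) = {u \<in> space U01. T u < ennreal t}"
    proof (intro set_eqI iffI)
      fix u assume "u \<in> (\<Union>n. A n)"
      then obtain n where "u \<in> space U01" "T u \<le> ennreal (t - 1 / Suc n)" unfolding A_def by auto
      moreover have "ennreal (t - 1 / Suc n) < ennreal t"
        using t0 by (intro ennreal_lessI) auto
      ultimately show "u \<in> {u \<in> space U01. T u < ennreal t}" by auto
    next
      fix u assume u: "u \<in> {u \<in> space U01. T u < ennreal t}"
      then have "T u < \<top>" using less_le_trans by fastforce
      then obtain r where r: "T u = ennreal r" "0 \<le> r" by (metis ennreal_cases less_irrefl)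
      with u have "r < t" by (auto simp: ennreal_less_iff)
      then obtain n where n: "1 / Suc n < t - r"
        by (metis diff_gt_0_iff_gt nat_approx_posE of_nat_Suc)
      then have "T u \<le> ennreal (t - 1 / Suc n)" using r by (auto intro!: ennreal_leI)
      with u show "u \<in> (\<Union>n. A n)" unfolding A_def by auto
    qed
    have lim: "(\<lambda>n. measure U01 (A n)) \<longlonglongrightarrow> L"
      unfolding L_def UA[symmetric] using Ameas inc by (intro U.finite_Lim_measure_incseq) auto
    show ?thesis
    proof (rule order_tendstoI)
      fix a assume "a < L"
      then obtain n where n: "a < measure U01 (A n)"
        using order_tendstoD(1)[OF lim] by (meson eventually_sequentially order.refl)
      have "eventually (\<lambda>s. s \<in> {max 0 (t - 1 / Suc n) <..< t}) (at_left t)"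
        using t0 by (intro eventually_at_left_real) (auto simp: max_def)
      then show "eventually (\<lambda>s. a < cdfT T s) (at_left t)"
      proof eventually_elim
        case (elim s)
        then have s0: "0 \<le> s" by auto
        have st: "ennreal (t - 1 / Suc n) \<le> ennreal s" using elim by (intro ennreal_leI) auto
        have "A n \<subseteq> {u \<in> space U01. T u \<le> ennreal s}"
          unfolding A_def using order.trans[OF _ st] by blast
        then have "measure U01 (A n) \<le> measure U01 {u \<in> space U01. T u \<le> ennreal s}"
          by (intro U.finite_measure_mono) measurable
        then show ?case using n cdfT_U01[OF T s0] by simp
      qed
    next
      fix a assume "L < a"
      have "eventually (\<lambda>s. s \<in> {0 <..< t}) (at_left t)"
        using t0 by (intro eventually_at_left_real) auto
      then show "eventually (\<lambda>s. cdfT T s < a) (at_left t)"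
      proof eventually_elim
        case (elim s)
        then have s0: "0 \<le> s" by auto
        have st: "ennreal s < ennreal t" using elim by (intro ennreal_lessI) auto
        have "{u \<in> space U01. T u \<le> ennreal s} \<subseteq> {u \<in> space U01. T u < ennreal t}"
          using order.strict_trans1[OF _ st] by blast
        then have "measure U01 {u \<in> space U01. T u \<le> ennreal s} \<le> L"
          unfolding L_def by (intro U.finite_measure_mono) measurable
        then show ?case using \<open>L < a\<close> cdfT_U01[OF T s0] by simp
      qed
    qed
  qed
  then show ?thesis unfolding cdf_left_def L_def[symmetric]
    by (intro tendsto_Lim) (auto simp: trivial_limit_at_left_real)
qed

lemma one_minus_cdf_left_cdfT:
  assumes T[measurable]: "T \<in> borel_measurable U01"
  shows "1 - cdf_left (cdfT T) t = measure U01 {u \<in> space U01. ennreal t \<le> T u}"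
proof -
  interpret U: prob_space U01 by (rule prob_space_U01)
  have "1 - cdf_left (cdfT T) t = 1 - measure U01 {u \<in> space U01. T u < ennreal t}"
    by (simp add: cdf_left_cdfT)
  also have "\<dots> = measure U01 (space U01 - {u \<in> space U01. T u < ennreal t})"
    by (subst U.prob_compl) measurable
  also have "space U01 - {u \<in> space U01. T u < ennreal t} = {u \<in> space U01. ennreal t \<le> T u}"
    by auto
  finally show ?thesis .
qed

lemma one_minus_cdfT:
  assumes T[measurable]: "T \<in> borel_measurable U01" and t: "0 \<le> t"
  shows "1 - cdfT T t = measure U01 {u \<in> space U01. ennreal t < T u}"
proof -
  interpret U: prob_space U01 by (rule prob_space_U01)
  have "1 - cdfT T t = 1 - measure U01 {u \<in> space U01. T u \<le> ennreal t}"
    by (simp add: cdfT_U01 t)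
  also have "\<dots> = measure U01 (space U01 - {u \<in> space U01. T u \<le> ennreal t})"
    by (subst U.prob_compl) measurable
  also have "space U01 - {u \<in> space U01. T u \<le> ennreal t} = {u \<in> space U01. ennreal t < T u}"
    by auto
  finally show ?thesis .
qed




lemma rat_grid_mem:
  fixes t :: real assumes t: "0 \<le> t"
  shows "real_of_int \<lceil>t * Suc k\<rceil> / Suc k \<in> {q\<in>\<rat>. 0 \<le> q}"
proof -
  have "t \<le> real_of_int \<lceil>t * Suc k\<rceil> / Suc k" by (simp add: pos_le_divide_eq)
  then show ?thesis using t by auto
qed

lemma rat_grid_lim:
  fixes t :: real assumes t: "0 \<le> t"
  shows "(\<lambda>k. real_of_int \<lceil>t * Suc k\<rceil> / Suc k) \<longlonglongrightarrow> t"
proof -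
  define q where "q k = real_of_int \<lceil>t * Suc k\<rceil> / Suc k" for k :: nat
  have lo: "t \<le> q k" for k
    unfolding q_def by (simp add: pos_le_divide_eq)
  have hi: "q k \<le> t + 1 / Suc k" for k
  proof -
    have "real_of_int \<lceil>t * Suc k\<rceil> \<le> t * Suc k + 1" by linarith
    then show ?thesis unfolding q_def by (simp add: divide_simps)
  qed
  have lim0: "(\<lambda>k. 1 / real (Suc k)) \<longlonglongrightarrow> 0"
    using LIMSEQ_inverse_real_of_nat by (simp only: inverse_eq_divide)
  have lim: "(\<lambda>k. t + 1 / real (Suc k)) \<longlonglongrightarrow> t"
    using tendsto_add[OF tendsto_const lim0, of t] by simp
  have "q \<longlonglongrightarrow> t"
    apply (rule tendsto_sandwich[of "\<lambda>_. t" q _ "\<lambda>k. t + 1 / real (Suc k)"])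
       apply (rule always_eventually, rule allI, rule lo)
      apply (rule always_eventually, rule allI, rule hi)
     apply (rule tendsto_const)
    apply (rule lim)
    done
  then show ?thesis unfolding q_def .
qed

lemma carath:
  fixes Z :: "real \<Rightarrow> 'a \<Rightarrow> real" and Y :: "'b \<Rightarrow> real"
  assumes Zm: "\<And>s. 0 \<le> s \<Longrightarrow> Z s \<in> borel_measurable M"
    and Zc: "\<And>\<omega>. \<omega> \<in> space M \<Longrightarrow> continuous_on {0..} (\<lambda>t. Z t \<omega>)"
    and Y: "Y \<in> borel_measurable N" and Y0: "\<And>z. z \<in> space N \<Longrightarrow> 0 \<le> Y z"
    and p: "p \<in> measurable N M"
  shows "(\<lambda>z. Z (Y z) (p z)) \<in> borel_measurable N"
proof (rule borel_measurable_LIMSEQ_real)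
  define q where "q k z = real_of_int \<lceil>Y z * Suc k\<rceil> / Suc k" for k :: nat and z
  show "(\<lambda>k. Z (max 0 (q k z)) (p z)) \<longlonglongrightarrow> Z (Y z) (p z)" if z: "z \<in> space N" for z
  proof -
    have Y0z: "0 \<le> Y z" by (rule Y0[OF z])
    have qlim: "(\<lambda>k. q k z) \<longlonglongrightarrow> Y z"
      unfolding q_def by (rule rat_grid_lim[OF Y0z])
    have qQ: "q k z \<in> {q\<in>\<rat>. 0 \<le> q}" for k
      unfolding q_def by (rule rat_grid_mem[OF Y0z])
    have "(\<lambda>k. Z (q k z) (p z)) \<longlonglongrightarrow> Z (Y z) (p z)"
      by (rule continuous_on_tendsto_compose[OF Zc[OF measurable_space[OF p z]] qlim])
        (use Y0z qQ in auto)
    moreover have "max 0 (q k z) = q k z" for k using qQ[of k] by auto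
    ultimately show ?thesis by simp
  qed
  show "(\<lambda>z. Z (max 0 (q k z)) (p z)) \<in> borel_measurable N" for k
  proof -
    have "(\<lambda>z. (\<lambda>i::int. \<lambda>z. Z (max 0 (real_of_int i / Suc k)) (p z)) (\<lceil>Y z * Suc k\<rceil>) z) \<in> borel_measurable N"
    proof (rule measurable_compose_countable[where f="\<lambda>(i::int) z. Z (max 0 (real_of_int i / Suc k)) (p z)" and g="\<lambda>z. \<lceil>Y z * Suc k\<rceil>"])
      show "(\<lambda>z. Z (max 0 (real_of_int i / Suc k)) (p z)) \<in> borel_measurable N" for i :: int
        using measurable_compose[OF p Zm[of "max 0 (real_of_int i / Suc k)"]] by simp
      show "(\<lambda>z. \<lceil>Y z * Suc k\<rceil>) \<in> measurable N (count_space UNIV)"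
        using Y by measurable
    qed
    then show ?thesis unfolding q_def by simp
  qed
qed




lemma proc_bound:
  fixes g :: "real \<Rightarrow> real"
  assumes g: "continuous_on {0..} g" and t: "0 \<le> t"
  shows "ennreal \<bar>g t\<bar> \<le> (SUP q\<in>{q\<in>\<rat>. 0 \<le> q}. ennreal \<bar>g q\<bar>)"
proof -
  define q where "q k = real_of_int \<lceil>t * Suc k\<rceil> / Suc k" for k :: nat
  have qQ: "q k \<in> {q\<in>\<rat>. 0 \<le> q}" for k unfolding q_def by (rule rat_grid_mem[OF t])
  have "(\<lambda>k. g (q k)) \<longlonglongrightarrow> g t"
    by (rule continuous_on_tendsto_compose[OF g]) (use rat_grid_lim[OF t] qQ t in \<open>auto simp: q_def\<close>)
  then have "(\<lambda>k. ennreal \<bar>g (q k)\<bar>) \<longlonglongrightarrow> ennreal \<bar>g t\<bar>"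
    by (intro tendsto_ennrealI tendsto_rabs)
  then show ?thesis
    by (rule LIMSEQ_le_const2) (use qQ in \<open>auto intro!: exI[of _ 0] SUP_upper\<close>)
qed

locale setting =
  fixes M :: "'a measure" and F :: "ennreal \<Rightarrow> 'a measure" and P :: "real \<Rightarrow> 'a measure"
    and X :: "real \<Rightarrow> 'a \<Rightarrow> real" and I :: "real set" and r :: real
    and R G :: "real \<Rightarrow> real" and x :: real
    and \<gamma>a \<gamma>b :: "'a \<Rightarrow> real \<Rightarrow> ennreal"
  assumes I_open: "open I"
    and filt: "filtration (space M) F" and sets_F: "\<And>t. sets (F t) \<subseteq> sets M"
    and Px: "prob_space (P x)" and sets_Px: "sets (P x) = sets M"
    and adapted: "\<And>t. 0 \<le> t \<Longrightarrow> X t \<in> borel_measurable (F (ennreal t))"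
    and cont: "\<And>\<omega>. \<omega> \<in> space M \<Longrightarrow> continuous_on {0..} (\<lambda>t. X t \<omega>)"
    and range: "\<And>\<omega> t. \<omega> \<in> space M \<Longrightarrow> 0 \<le> t \<Longrightarrow> X t \<omega> \<in> I"
    and cR: "continuous_on I R" and cG: "continuous_on I G"
    and intR: "(\<integral>\<^sup>+\<omega>. (SUP t\<in>{0..}. ennreal (exp (- r * t) * \<bar>R (X t \<omega>)\<bar>)) \<partial>P x) < \<infinity>"
    and intG: "(\<integral>\<^sup>+\<omega>. (SUP t\<in>{0..}. ennreal (exp (- r * t) * \<bar>G (X t \<omega>)\<bar>)) \<partial>P x) < \<infinity>"
    and rsta: "randomized_stopping_time F M \<gamma>a" and rstb: "randomized_stopping_time F M \<gamma>b"
begin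

lemma space_Px[simp]: "space (P x) = space M"
  using sets_Px by (rule sets_eq_imp_space_eq)

lemma X_meas: "0 \<le> s \<Longrightarrow> X s \<in> borel_measurable M"
  by (rule measurable_from_subalg[OF _ adapted])
     (auto simp: subalgebra_def sets_F filtration.space_F[OF filt])

lemma comp_meas:
  assumes cH: "continuous_on I H" and s: "0 \<le> s"
  shows "(\<lambda>\<omega>. exp (- r * s) * H (X s \<omega>)) \<in> borel_measurable M"
proof -
  have "(\<lambda>y. if y \<in> I then H y else 0) \<in> borel_measurable borel"
    by (rule borel_measurable_continuous_on_if) (auto simp: I_open cH borel_open)
  then have "(\<lambda>\<omega>. (\<lambda>y. if y \<in> I then H y else 0) (X s \<omega>)) \<in> borel_measurable M"
    using X_meas[OF s] by (rule measurable_compose[rotated])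
  then have "(\<lambda>\<omega>. H (X s \<omega>)) \<in> borel_measurable M"
    by (rule measurable_cong[THEN iffD1, rotated]) (use range s in auto)
  then show ?thesis by measurable
qed

lemma comp_cont:
  assumes cH: "continuous_on I H" and \<omega>: "\<omega> \<in> space M"
  shows "continuous_on {0..} (\<lambda>t. exp (- r * t) * H (X t \<omega>))"
  by (intro continuous_intros continuous_on_compose2[OF cH cont[OF \<omega>]]) (use range \<omega> in auto)

definition BB :: "(real \<Rightarrow> real) \<Rightarrow> 'a \<Rightarrow> ennreal" where
  "BB H \<omega> = (SUP q\<in>{q::real. q \<in> \<rat> \<and> 0 \<le> q}. ennreal \<bar>exp (- r * q) * H (X q \<omega>)\<bar>)"

lemma BB_meas:
  assumes cH: "continuous_on I H" shows "BB H \<in> borel_measurable M"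
  unfolding BB_def
proof (rule borel_measurable_SUP)
  show "countable {q::real. q \<in> \<rat> \<and> 0 \<le> q}" by (rule countable_subset[OF _ countable_rat]) auto
  fix q :: real assume "q \<in> {q\<in>\<rat>. 0 \<le> q}"
  then have [measurable]: "(\<lambda>\<omega>. exp (- r * q) * H (X q \<omega>)) \<in> borel_measurable M"
    using comp_meas[OF cH] by auto
  show "(\<lambda>\<omega>. ennreal \<bar>exp (- r * q) * H (X q \<omega>)\<bar>) \<in> borel_measurable M" by measurable
qed

lemma BB_bound: "continuous_on I H \<Longrightarrow> \<omega> \<in> space M \<Longrightarrow> 0 \<le> t \<Longrightarrow>
    ennreal \<bar>exp (- r * t) * H (X t \<omega>)\<bar> \<le> BB H \<omega>"
  unfolding BB_def by (rule proc_bound[OF comp_cont])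

lemma BB_int:
  assumes "(\<integral>\<^sup>+\<omega>. (SUP t\<in>{0..}. ennreal (exp (- r * t) * \<bar>H (X t \<omega>)\<bar>)) \<partial>P x) < \<infinity>"
  shows "(\<integral>\<^sup>+\<omega>. BB H \<omega> \<partial>P x) < \<infinity>"
proof -
  have "(\<integral>\<^sup>+\<omega>. BB H \<omega> \<partial>P x) \<le> (\<integral>\<^sup>+\<omega>. (SUP t\<in>{0..}. ennreal (exp (- r * t) * \<bar>H (X t \<omega>)\<bar>)) \<partial>P x)"
    unfolding BB_def by (intro nn_integral_mono SUP_subset_mono) (auto simp: abs_mult)
  then show ?thesis using assms by (rule le_less_trans)
qed

lemma BR_int: "(\<integral>\<^sup>+\<omega>. BB R \<omega> \<partial>P x) < \<infinity>" by (rule BB_int[OF intR])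
lemma BG_int: "(\<integral>\<^sup>+\<omega>. BB G \<omega> \<partial>P x) < \<infinity>" by (rule BB_int[OF intG])

lemma rst_meas:
  assumes "randomized_stopping_time F M \<gamma>"
  shows "(\<lambda>(\<omega>, u). \<gamma> \<omega> u) \<in> borel_measurable (M \<Otimes>\<^sub>M U01)"
proof -
  have e: "sets (M \<Otimes>\<^sub>M U01) = sets (M \<Otimes>\<^sub>M restrict_space borel {0..1::real})"
    by (intro sets_pair_measure_cong refl sets_restrict_space_cong) simp
  have "(\<lambda>(\<omega>, u). \<gamma> \<omega> u) \<in> borel_measurable (M \<Otimes>\<^sub>M restrict_space borel {0..1::real})"
    using assms unfolding randomized_stopping_time_def by blast
  then show ?thesis unfolding measurable_cong_sets[OF e refl] .
qed

lemma rst_meas_sec: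
  assumes "randomized_stopping_time F M \<gamma>" "\<omega> \<in> space M"
  shows "\<gamma> \<omega> \<in> borel_measurable U01"
  using measurable_Pair2[OF rst_meas[OF assms(1)] assms(2)] by simp

end




lemma Icc01_Collect: "{u::real. 0 \<le> u \<and> u \<le> 1} = {0..1}" by auto

lemma measure_U01_01[simp]: "measure U01 {0..1} = 1"
  by (simp add: measure_def)

lemma measure_U01_01'[simp]: "measure U01 {u::real. 0 \<le> u \<and> u \<le> 1} = 1"
  unfolding Icc01_Collect by simp

lemma measure_lborel_01'[simp]: "measure lborel {u::real. 0 \<le> u \<and> u \<le> 1} = 1"
  unfolding Icc01_Collect by simp

lemma abs_integral_U01_le:
  fixes f :: "real \<Rightarrow> real"
  assumes f: "f \<in> borel_measurable U01" and B: "\<And>u. u \<in> space U01 \<Longrightarrow> \<bar>f u\<bar> \<le> B"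
  shows "\<bar>\<integral>u. f u \<partial>U01\<bar> \<le> B"
proof -
  interpret U: prob_space U01 by (rule prob_space_U01)
  have B0: "0 \<le> B" using B[of 0] by auto
  have int: "integrable U01 f"
    by (rule U.integrable_const_bound[where B=B]) (use B f in auto)
  have "\<bar>\<integral>u. f u \<partial>U01\<bar> \<le> (\<integral>u. \<bar>f u\<bar> \<partial>U01)"
    by (rule integral_abs_bound)
  also have "\<dots> \<le> (\<integral>u. B \<partial>U01)"
    by (rule integral_mono) (use int B in auto)
  also have "\<dots> = B" by (simp add: U.prob_space)
  finally show ?thesis .
qed

lemma integrable_U01_bound:
  fixes f :: "real \<Rightarrow> real"
  assumes f: "f \<in> borel_measurable U01" and B: "\<And>u. u \<in> space U01 \<Longrightarrow> \<bar>f u\<bar> \<le> B"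
  shows "integrable U01 f"
proof -
  interpret U: prob_space U01 by (rule prob_space_U01)
  show ?thesis by (rule U.integrable_const_bound[where B=B]) (use B f in auto)
qed

lemma integrable_U01U01_bound:
  fixes f :: "real \<times> real \<Rightarrow> real"
  assumes f: "f \<in> borel_measurable (U01 \<Otimes>\<^sub>M U01)" and B: "\<And>z. z \<in> space (U01 \<Otimes>\<^sub>M U01) \<Longrightarrow> \<bar>f z\<bar> \<le> B"
  shows "integrable (U01 \<Otimes>\<^sub>M U01) f"
proof -
  interpret UU: pair_prob_space U01 U01
    by (simp add: pair_prob_space_def pair_sigma_finite_def prob_space_U01 prob_space_imp_sigma_finite)
  show ?thesis by (rule UU.integrable_const_bound[where B=B]) (use B f in auto)
qed

lemma measure_pred_meas:
  assumes Q: "Measurable.pred (N \<Otimes>\<^sub>M U01) (\<lambda>(z, v). Q z v)"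
  shows "(\<lambda>z. measure U01 {v \<in> space U01. Q z v}) \<in> borel_measurable N"
proof -
  interpret U: prob_space U01 by (rule prob_space_U01)
  have eq: "measure U01 {v \<in> space U01. Q z v} = (\<integral>v. (if Q z v then 1 else (0::real)) \<partial>U01)" for z
  proof -
    have "(\<integral>v. (if Q z v then 1 else (0::real)) \<partial>U01) = (\<integral>v. indicator {v \<in> space U01. Q z v} v \<partial>U01)"
      by (intro Bochner_Integration.integral_cong) (auto simp: indicator_def)
    also have "\<dots> = measure U01 {v \<in> space U01. Q z v}"
      by (subst Bochner_Integration.integral_indicator) (auto intro!: arg_cong[where f="measure U01"])
    finally show ?thesis by simp
  qed
  have Q': "Measurable.pred (N \<Otimes>\<^sub>M U01) (\<lambda>w. Q (fst w) (snd w))"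
    using Q unfolding case_prod_unfold .
  have "(\<lambda>w. if Q (fst w) (snd w) then 1 else (0::real)) \<in> borel_measurable (N \<Otimes>\<^sub>M U01)"
    using Q' by measurable
  then have "case_prod (\<lambda>z v. if Q z v then 1 else (0::real)) \<in> borel_measurable (N \<Otimes>\<^sub>M U01)"
    unfolding case_prod_unfold .
  then have "(\<lambda>z. \<integral>v. (if Q z v then 1 else (0::real)) \<partial>U01) \<in> borel_measurable N"
    by (rule sigma_finite_measure.borel_measurable_lebesgue_integral[OF prob_space_imp_sigma_finite[OF prob_space_U01]])
  then show ?thesis unfolding eq .
qed

lemma pushforward':
  fixes T :: "real \<Rightarrow> ennreal" and f :: "real \<Rightarrow> real"
  assumes T: "T \<in> borel_measurable U01" and f: "(\<lambda>t. f (max 0 t)) \<in> borel_measurable borel"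
  shows "set_lebesgue_integral (interval_measure (cdfT T)) {0..} f
     = (\<integral>u. indicator {u. T u < \<infinity>} u * f (enn2real (T u)) \<partial>U01)"
proof -
  have "set_lebesgue_integral (interval_measure (cdfT T)) {0..} f
      = set_lebesgue_integral (interval_measure (cdfT T)) {0..} (\<lambda>t. f (max 0 t))"
    unfolding set_lebesgue_integral_def by (intro Bochner_Integration.integral_cong) (auto simp: indicator_def)
  also have "\<dots> = (\<integral>u. indicator {u. T u < \<infinity>} u * f (max 0 (enn2real (T u))) \<partial>U01)"
    by (rule pushforward[OF T f])
  also have "\<dots> = (\<integral>u. indicator {u. T u < \<infinity>} u * f (enn2real (T u)) \<partial>U01)"
    by (intro Bochner_Integration.integral_cong) auto
  finally show ?thesis .
qed

lemma mono_cdfT: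
  assumes T[measurable]: "T \<in> borel_measurable U01"
  shows "mono (cdfT T)"
proof (rule monoI)
  interpret U: prob_space U01 by (rule prob_space_U01)
  fix s t :: real assume st: "s \<le> t"
  show "cdfT T s \<le> cdfT T t"
  proof (cases "s < 0")
    case True then show ?thesis by (simp add: cdfT_def)
  next
    case False
    then have "0 \<le> s" "0 \<le> t" using st by auto
    moreover have "measure U01 {u \<in> space U01. T u \<le> ennreal s} \<le> measure U01 {u \<in> space U01. T u \<le> ennreal t}"
    proof (rule U.finite_measure_mono)
      have "ennreal s \<le> ennreal t" using st by (rule ennreal_leI)
      then show "{u \<in> space U01. T u \<le> ennreal s} \<subseteq> {u \<in> space U01. T u \<le> ennreal t}"
        using order.trans by blast
    qed measurable
    ultimately show ?thesis by (simp add: cdfT_U01[OF T])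
  qed
qed

lemma mono_cdf_left_cdfT:
  assumes T[measurable]: "T \<in> borel_measurable U01"
  shows "mono (cdf_left (cdfT T))"
proof (rule monoI)
  interpret U: prob_space U01 by (rule prob_space_U01)
  fix s t :: real assume st: "s \<le> t"
  have "measure U01 {u \<in> space U01. T u < ennreal s} \<le> measure U01 {u \<in> space U01. T u < ennreal t}"
  proof (rule U.finite_measure_mono)
    have "ennreal s \<le> ennreal t" using st by (rule ennreal_leI)
    then show "{u \<in> space U01. T u < ennreal s} \<subseteq> {u \<in> space U01. T u < ennreal t}"
      using order.strict_trans2 by blast
  qed measurable
  then show "cdf_left (cdfT T) s \<le> cdf_left (cdfT T) t" by (simp add: cdf_left_cdfT[OF T])
qed

lemma rst_cdf_eq: "rst_cdf \<gamma> \<omega> = cdfT (\<gamma> \<omega>)"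
  by (simp add: fun_eq_iff rst_cdf_def cdfT_def)

lemma pure_cdf_eq: "pure_cdf \<tau> \<omega> = cdfT (\<lambda>u. \<tau> \<omega>)"
  by (simp add: fun_eq_iff pure_cdf_def cdfT_def)

lemma measure_U01_const: "measure U01 {u \<in> space U01. P} = (if P then 1 else 0)"
proof -
  interpret U: prob_space U01 by (rule prob_space_U01)
  show ?thesis using U.prob_space by auto
qed




context setting
begin

definition Zp :: "(real \<Rightarrow> real) \<Rightarrow> real \<Rightarrow> 'a \<Rightarrow> real" where
  "Zp H t \<omega> = exp (- r * t) * H (X t \<omega>)"

lemma Zp_carath:
  assumes cH: "continuous_on I H" and Y: "Y \<in> borel_measurable N"
    and Y0: "\<And>z. z \<in> space N \<Longrightarrow> 0 \<le> Y z" and p: "p \<in> measurable N M"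
  shows "(\<lambda>z. Zp H (Y z) (p z)) \<in> borel_measurable N"
  unfolding Zp_def
  by (rule carath[where Z="\<lambda>t \<omega>. exp (- r * t) * H (X t \<omega>)", OF comp_meas[OF cH] comp_cont[OF cH] Y Y0 p])

lemma Zp_bound:
  assumes cH: "continuous_on I H" and \<omega>: "\<omega> \<in> space M" and t: "0 \<le> t" and B: "BB H \<omega> < \<infinity>"
  shows "\<bar>Zp H t \<omega>\<bar> \<le> enn2real (BB H \<omega>)"
proof -
  have "ennreal \<bar>Zp H t \<omega>\<bar> \<le> BB H \<omega>"
    unfolding Zp_def by (rule BB_bound[OF cH \<omega> t])
  then have "enn2real (ennreal \<bar>Zp H t \<omega>\<bar>) \<le> enn2real (BB H \<omega>)"
    using B by (intro enn2real_mono) auto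
  then show ?thesis by simp
qed

lemma ga_comp[measurable (raw)]:
  assumes f: "f \<in> measurable N M" and g: "g \<in> measurable N U01"
  shows "(\<lambda>z. \<gamma>a (f z) (g z)) \<in> borel_measurable N"
  using measurable_compose[OF measurable_Pair[OF f g] rst_meas[OF rsta]] by simp

lemma gb_comp[measurable (raw)]:
  assumes f: "f \<in> measurable N M" and g: "g \<in> measurable N U01"
  shows "(\<lambda>z. \<gamma>b (f z) (g z)) \<in> borel_measurable N"
  using measurable_compose[OF measurable_Pair[OF f g] rst_meas[OF rstb]] by simp

definition innerC :: "(real \<Rightarrow> real) \<Rightarrow> 'a \<Rightarrow> real" where
  "innerC C \<omega> =
     set_lebesgue_integral (interval_measure C) {0..}
              (\<lambda>t. exp (- r * t) * R (X t \<omega>) * (1 - cdf_left (rst_cdf \<gamma>b \<omega>) t))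
   + set_lebesgue_integral (interval_measure (rst_cdf \<gamma>b \<omega>)) {0..}
              (\<lambda>t. exp (- r * t) * G (X t \<omega>) * (1 - C t))"

lemma payoff_eq: "payoff P X r R G x Gi (rst_cdf \<gamma>b) = (\<integral>\<omega>. innerC (Gi \<omega>) \<omega> \<partial>P x)"
  by (simp add: payoff_def innerC_def)

lemma inner_formula:
  assumes \<omega>: "\<omega> \<in> space M" and T[measurable]: "T \<in> borel_measurable U01"
  shows "innerC (cdfT T) \<omega> =
     (\<integral>u. (if T u < \<infinity> then 1 else 0) * (Zp R (enn2real (T u)) \<omega> *
            measure U01 {v \<in> space U01. ennreal (enn2real (T u)) \<le> \<gamma>b \<omega> v}) \<partial>U01) +
     (\<integral>v. (if \<gamma>b \<omega> v < \<infinity> then 1 else 0) * (Zp G (enn2real (\<gamma>b \<omega> v)) \<omega> *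
            measure U01 {u \<in> space U01. ennreal (enn2real (\<gamma>b \<omega> v)) < T u}) \<partial>U01)"
proof -
  have gb[measurable]: "\<gamma>b \<omega> \<in> borel_measurable U01" by (rule rst_meas_sec[OF rstb \<omega>])
  have const: "(\<lambda>t::real. \<omega>) \<in> measurable borel M" using \<omega> by simp
  have [measurable]: "cdf_left (cdfT (\<gamma>b \<omega>)) \<in> borel_measurable borel"
    by (rule borel_measurable_mono[OF mono_cdf_left_cdfT[OF gb]])
  have [measurable]: "cdfT T \<in> borel_measurable borel"
    by (rule borel_measurable_mono[OF mono_cdfT[OF T]])
  have ZR[measurable]: "(\<lambda>t. Zp R (max 0 t) \<omega>) \<in> borel_measurable borel"
    by (rule Zp_carath[OF cR _ _ const]) auto
  have ZG[measurable]: "(\<lambda>t. Zp G (max 0 t) \<omega>) \<in> borel_measurable borel"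
    by (rule Zp_carath[OF cG _ _ const]) auto
  have 1: "set_lebesgue_integral (interval_measure (cdfT T)) {0..}
              (\<lambda>t. exp (- r * t) * R (X t \<omega>) * (1 - cdf_left (cdfT (\<gamma>b \<omega>)) t))
     = (\<integral>u. (if T u < \<infinity> then 1 else 0) * (Zp R (enn2real (T u)) \<omega> *
            measure U01 {v \<in> space U01. ennreal (enn2real (T u)) \<le> \<gamma>b \<omega> v}) \<partial>U01)"
  proof -
    have "set_lebesgue_integral (interval_measure (cdfT T)) {0..}
              (\<lambda>t. exp (- r * t) * R (X t \<omega>) * (1 - cdf_left (cdfT (\<gamma>b \<omega>)) t))
      = (\<integral>u. indicator {u. T u < \<infinity>} u * (exp (- r * enn2real (T u)) * R (X (enn2real (T u)) \<omega>) *
           (1 - cdf_left (cdfT (\<gamma>b \<omega>)) (enn2real (T u)))) \<partial>U01)"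
    proof (rule pushforward'[OF T])
      show "(\<lambda>t. exp (- r * max 0 t) * R (X (max 0 t) \<omega>) * (1 - cdf_left (cdfT (\<gamma>b \<omega>)) (max 0 t))) \<in> borel_measurable borel"
        using ZR unfolding Zp_def by measurable
    qed
    also have "\<dots> = (\<integral>u. (if T u < \<infinity> then 1 else 0) * (Zp R (enn2real (T u)) \<omega> *
            measure U01 {v \<in> space U01. ennreal (enn2real (T u)) \<le> \<gamma>b \<omega> v}) \<partial>U01)"
      by (intro Bochner_Integration.integral_cong refl) (simp add: one_minus_cdf_left_cdfT[OF gb] Zp_def indicator_def)
    finally show ?thesis .
  qed
  have 2: "set_lebesgue_integral (interval_measure (cdfT (\<gamma>b \<omega>))) {0..}
              (\<lambda>t. exp (- r * t) * G (X t \<omega>) * (1 - cdfT T t))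
     = (\<integral>v. (if \<gamma>b \<omega> v < \<infinity> then 1 else 0) * (Zp G (enn2real (\<gamma>b \<omega> v)) \<omega> *
            measure U01 {u \<in> space U01. ennreal (enn2real (\<gamma>b \<omega> v)) < T u}) \<partial>U01)"
  proof -
    have "set_lebesgue_integral (interval_measure (cdfT (\<gamma>b \<omega>))) {0..}
              (\<lambda>t. exp (- r * t) * G (X t \<omega>) * (1 - cdfT T t))
      = (\<integral>v. indicator {v. \<gamma>b \<omega> v < \<infinity>} v * (exp (- r * enn2real (\<gamma>b \<omega> v)) * G (X (enn2real (\<gamma>b \<omega> v)) \<omega>) *
           (1 - cdfT T (enn2real (\<gamma>b \<omega> v)))) \<partial>U01)"
    proof (rule pushforward'[OF gb])
      show "(\<lambda>t. exp (- r * max 0 t) * G (X (max 0 t) \<omega>) * (1 - cdfT T (max 0 t))) \<in> borel_measurable borel"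
        using ZG unfolding Zp_def by measurable
    qed
    also have "\<dots> = (\<integral>v. (if \<gamma>b \<omega> v < \<infinity> then 1 else 0) * (Zp G (enn2real (\<gamma>b \<omega> v)) \<omega> *
            measure U01 {u \<in> space U01. ennreal (enn2real (\<gamma>b \<omega> v)) < T u}) \<partial>U01)"
      by (intro Bochner_Integration.integral_cong refl) (simp add: one_minus_cdfT[OF T] Zp_def indicator_def)
    finally show ?thesis .
  qed
  show ?thesis unfolding innerC_def rst_cdf_eq 1 2 ..
qed

definition hfun :: "'a \<Rightarrow> ennreal \<Rightarrow> real" where
  "hfun \<omega> s = (if s < \<infinity> then 1 else 0) * (Zp R (enn2real s) \<omega> *
            measure U01 {v \<in> space U01. ennreal (enn2real s) \<le> \<gamma>b \<omega> v}) +
     (\<integral>v. (if \<gamma>b \<omega> v < \<infinity> then 1 else 0) * (Zp G (enn2real (\<gamma>b \<omega> v)) \<omega> *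
            (if ennreal (enn2real (\<gamma>b \<omega> v)) < s then 1 else 0)) \<partial>U01)"

lemma pure_formula:
  assumes \<omega>: "\<omega> \<in> space M"
  shows "innerC (cdfT (\<lambda>u. c)) \<omega> = hfun \<omega> c"
proof -
  have c: "(\<lambda>u. c) \<in> borel_measurable U01" by simp
  show ?thesis unfolding inner_formula[OF \<omega> c] hfun_def measure_U01_const
    by simp
qed

end




lemma abs_bound_aux:
  fixes z m :: real
  assumes "0 \<le> m" "m \<le> 1"
  shows "\<bar>(if P then 1 else 0) * (z * m)\<bar> \<le> \<bar>z\<bar>"
  using assms by (cases P) (auto simp: abs_mult intro: mult_left_le)

lemma integral_if_U01:
  "(\<integral>u. (if P u then 1 else 0::real) \<partial>U01) = measure U01 {u \<in> space U01. P u}"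
proof -
  have "(\<integral>u. (if P u then 1 else 0::real) \<partial>U01) = (\<integral>u. indicator {u \<in> space U01. P u} u \<partial>U01)"
    by (intro Bochner_Integration.integral_cong) (auto simp: indicator_def)
  also have "\<dots> = measure U01 {u \<in> space U01. P u}"
    by (subst Bochner_Integration.integral_indicator) (auto intro!: arg_cong[where f="measure U01"])
  finally show ?thesis .
qed

context setting
begin

lemma rst_formula:
  assumes \<omega>: "\<omega> \<in> space M" and BR: "BB R \<omega> < \<infinity>" and BG: "BB G \<omega> < \<infinity>"
  shows "innerC (cdfT (\<gamma>a \<omega>)) \<omega> = (\<integral>u. hfun \<omega> (\<gamma>a \<omega> u) \<partial>U01)"
proof -
  interpret U: prob_space U01 by (rule prob_space_U01)
  interpret UU: pair_sigma_finite U01 U01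
    by (simp add: pair_sigma_finite_def prob_space_U01 prob_space_imp_sigma_finite)
  have ga[measurable]: "\<gamma>a \<omega> \<in> borel_measurable U01" by (rule rst_meas_sec[OF rsta \<omega>])
  have gb[measurable]: "\<gamma>b \<omega> \<in> borel_measurable U01" by (rule rst_meas_sec[OF rstb \<omega>])
  have const1: "(\<lambda>u::real. \<omega>) \<in> measurable U01 M" using \<omega> by simp
  have const2: "(\<lambda>u::real\<times>real. \<omega>) \<in> measurable (U01 \<Otimes>\<^sub>M U01) M" using \<omega> by simp
  define A where "A u = (if \<gamma>a \<omega> u < \<infinity> then 1 else 0) * (Zp R (enn2real (\<gamma>a \<omega> u)) \<omega> *
            measure U01 {v \<in> space U01. ennreal (enn2real (\<gamma>a \<omega> u)) \<le> \<gamma>b \<omega> v})" for u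
  define k where "k u v = (if \<gamma>b \<omega> v < \<infinity> then 1 else 0) * (Zp G (enn2real (\<gamma>b \<omega> v)) \<omega> *
            (if ennreal (enn2real (\<gamma>b \<omega> v)) < \<gamma>a \<omega> u then 1 else 0))" for u v
  define B where "B u = (\<integral>v. k u v \<partial>U01)" for u
  have hAB: "hfun \<omega> (\<gamma>a \<omega> u) = A u + B u" for u
    unfolding hfun_def A_def B_def k_def ..
  have ZRa[measurable]: "(\<lambda>u. Zp R (enn2real (\<gamma>a \<omega> u)) \<omega>) \<in> borel_measurable U01"
    by (rule Zp_carath[OF cR _ _ const1]) auto
  have meas_a[measurable]: "(\<lambda>u. measure U01 {v \<in> space U01. ennreal (enn2real (\<gamma>a \<omega> u)) \<le> \<gamma>b \<omega> v}) \<in> borel_measurable U01"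
    by (rule measure_pred_meas) measurable
  have A_meas[measurable]: "A \<in> borel_measurable U01"
    unfolding A_def by measurable
  have ZGb[measurable]: "(\<lambda>z. Zp G (enn2real (\<gamma>b \<omega> (snd z))) \<omega>) \<in> borel_measurable (U01 \<Otimes>\<^sub>M U01)"
    by (rule Zp_carath[OF cG _ _ const2]) auto
  have k_meas: "(\<lambda>z. k (fst z) (snd z)) \<in> borel_measurable (U01 \<Otimes>\<^sub>M U01)"
    unfolding k_def by measurable
  have k_meas': "(\<lambda>(v, u). k u v) \<in> borel_measurable (U01 \<Otimes>\<^sub>M U01)"
  proof -
    have ZGb': "(\<lambda>z. Zp G (enn2real (\<gamma>b \<omega> (fst z))) \<omega>) \<in> borel_measurable (U01 \<Otimes>\<^sub>M U01)"
      by (rule Zp_carath[OF cG _ _ const2]) auto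
    have "(\<lambda>z. k (snd z) (fst z)) \<in> borel_measurable (U01 \<Otimes>\<^sub>M U01)"
      unfolding k_def using ZGb' by measurable
    then show ?thesis by (simp add: case_prod_beta')
  qed
  have B_meas[measurable]: "B \<in> borel_measurable U01"
  proof -
    have "case_prod k \<in> borel_measurable (U01 \<Otimes>\<^sub>M U01)"
      using k_meas by (simp add: case_prod_beta')
    then show ?thesis unfolding B_def by (rule sigma_finite_measure.borel_measurable_lebesgue_integral[OF prob_space_imp_sigma_finite[OF prob_space_U01]])
  qed
  have kv_meas: "k u \<in> borel_measurable U01" if "u \<in> space U01" for u
    using measurable_Pair2[OF k_meas that] by simp
  have bZR: "\<bar>Zp R t \<omega>\<bar> \<le> enn2real (BB R \<omega>)" if "0 \<le> t" for t
    by (rule Zp_bound[OF cR \<omega> that BR])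
  have bZG: "\<bar>Zp G t \<omega>\<bar> \<le> enn2real (BB G \<omega>)" if "0 \<le> t" for t
    by (rule Zp_bound[OF cG \<omega> that BG])
  have A_bound: "\<bar>A u\<bar> \<le> enn2real (BB R \<omega>)" for u
    unfolding A_def by (rule order_trans[OF abs_bound_aux bZR]) auto
  have k_bound: "\<bar>k u v\<bar> \<le> enn2real (BB G \<omega>)" for u v
    unfolding k_def by (rule order_trans[OF abs_bound_aux bZG]) auto
  have B_bound: "\<bar>B u\<bar> \<le> enn2real (BB G \<omega>)" if "u \<in> space U01" for u
    unfolding B_def by (rule abs_integral_U01_le[OF kv_meas[OF that] k_bound])
  have A_int: "integrable U01 A" by (rule integrable_U01_bound[OF A_meas A_bound])
  have B_int: "integrable U01 B" by (rule integrable_U01_bound[OF B_meas B_bound])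
  have k_int: "integrable (U01 \<Otimes>\<^sub>M U01) (\<lambda>(v, u). k u v)"
    by (rule integrable_U01U01_bound[OF k_meas', where B="enn2real (BB G \<omega>)"]) (auto simp: k_bound)
  have "(\<integral>u. hfun \<omega> (\<gamma>a \<omega> u) \<partial>U01) = (\<integral>u. A u \<partial>U01) + (\<integral>u. B u \<partial>U01)"
    unfolding hAB by (rule Bochner_Integration.integral_add[OF A_int B_int])
  also have "(\<integral>u. B u \<partial>U01) = (\<integral>v. \<integral>u. k u v \<partial>U01 \<partial>U01)"
    unfolding B_def using UU.Fubini_integral[of "\<lambda>v u. k u v"] k_int by simp
  also have "\<dots> = (\<integral>v. (if \<gamma>b \<omega> v < \<infinity> then 1 else 0) * (Zp G (enn2real (\<gamma>b \<omega> v)) \<omega> *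
            measure U01 {u \<in> space U01. ennreal (enn2real (\<gamma>b \<omega> v)) < \<gamma>a \<omega> u}) \<partial>U01)"
    unfolding k_def by (simp add: integral_if_U01)
  finally show ?thesis
    unfolding inner_formula[OF \<omega> ga] A_def by simp
qed

end




context setting
begin

lemma hfun_bound:
  assumes \<omega>: "\<omega> \<in> space M" and BR: "BB R \<omega> < \<infinity>" and BG: "BB G \<omega> < \<infinity>"
  shows "\<bar>hfun \<omega> s\<bar> \<le> enn2real (BB R \<omega>) + enn2real (BB G \<omega>)"
proof -
  interpret U: prob_space U01 by (rule prob_space_U01)
  have gb[measurable]: "\<gamma>b \<omega> \<in> borel_measurable U01" by (rule rst_meas_sec[OF rstb \<omega>])
  have const1: "(\<lambda>u::real. \<omega>) \<in> measurable U01 M" using \<omega> by simp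
  have ZGb[measurable]: "(\<lambda>v. Zp G (enn2real (\<gamma>b \<omega> v)) \<omega>) \<in> borel_measurable U01"
    by (rule Zp_carath[OF cG _ _ const1]) auto
  have bZR: "\<bar>Zp R t \<omega>\<bar> \<le> enn2real (BB R \<omega>)" if "0 \<le> t" for t
    by (rule Zp_bound[OF cR \<omega> that BR])
  have bZG: "\<bar>Zp G t \<omega>\<bar> \<le> enn2real (BB G \<omega>)" if "0 \<le> t" for t
    by (rule Zp_bound[OF cG \<omega> that BG])
  have 1: "\<bar>(if s < \<infinity> then 1 else 0) * (Zp R (enn2real s) \<omega> *
            measure U01 {v \<in> space U01. ennreal (enn2real s) \<le> \<gamma>b \<omega> v})\<bar> \<le> enn2real (BB R \<omega>)"
    by (rule order_trans[OF abs_bound_aux bZR]) auto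
  have 2: "\<bar>\<integral>v. (if \<gamma>b \<omega> v < \<infinity> then 1 else 0) * (Zp G (enn2real (\<gamma>b \<omega> v)) \<omega> *
            (if ennreal (enn2real (\<gamma>b \<omega> v)) < s then 1 else 0)) \<partial>U01\<bar> \<le> enn2real (BB G \<omega>)"
    by (rule abs_integral_U01_le, measurable) (rule order_trans[OF abs_bound_aux bZG], auto)
  show ?thesis unfolding hfun_def using 1 2 by linarith
qed

lemma main:
  "ereal (payoff P X r R G x (rst_cdf \<gamma>a) (rst_cdf \<gamma>b))
     \<le> (SUP \<tau>\<in>{\<tau>. stopping_time F \<tau>}. ereal (payoff P X r R G x (pure_cdf \<tau>) (rst_cdf \<gamma>b)))"
proof -
  interpret Px: prob_space "P x" by (rule Px)
  interpret U: prob_space U01 by (rule prob_space_U01)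
  interpret PU: pair_sigma_finite "P x" U01
    by (simp add: pair_sigma_finite_def prob_space_U01 prob_space_imp_sigma_finite Px)
  have sPU: "sets (P x \<Otimes>\<^sub>M U01) = sets (M \<Otimes>\<^sub>M U01)"
    by (rule sets_pair_measure_cong[OF sets_Px refl])
  define H where "H \<omega> u = hfun \<omega> (\<gamma>a \<omega> u)" for \<omega> u
  have fstM: "fst \<in> measurable (M \<Otimes>\<^sub>M U01) M" by simp
  have fstfstM: "(\<lambda>w. fst (fst w)) \<in> measurable ((M \<Otimes>\<^sub>M U01) \<Otimes>\<^sub>M U01) M" by simp
  have ZRa[measurable]: "(\<lambda>z. Zp R (enn2real (\<gamma>a (fst z) (snd z))) (fst z)) \<in> borel_measurable (M \<Otimes>\<^sub>M U01)"
    by (rule Zp_carath[OF cR _ _ fstM]) auto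
  have mA[measurable]: "(\<lambda>z. measure U01 {v \<in> space U01. ennreal (enn2real (\<gamma>a (fst z) (snd z))) \<le> \<gamma>b (fst z) v})
      \<in> borel_measurable (M \<Otimes>\<^sub>M U01)"
    by (rule measure_pred_meas) measurable
  have ZGb[measurable]: "(\<lambda>w. Zp G (enn2real (\<gamma>b (fst (fst w)) (snd w))) (fst (fst w)))
      \<in> borel_measurable ((M \<Otimes>\<^sub>M U01) \<Otimes>\<^sub>M U01)"
    by (rule Zp_carath[OF cG _ _ fstfstM]) auto
  have ZGb2[measurable]: "(\<lambda>z. Zp G (enn2real (\<gamma>b (fst z) (snd z))) (fst z)) \<in> borel_measurable (M \<Otimes>\<^sub>M U01)"
    by (rule Zp_carath[OF cG _ _ fstM]) auto
  have mC[measurable]: "(\<lambda>z. measure U01 {u \<in> space U01. ennreal (enn2real (\<gamma>b (fst z) (snd z))) < \<gamma>a (fst z) u})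
      \<in> borel_measurable (M \<Otimes>\<^sub>M U01)"
    by (rule measure_pred_meas) measurable
  have H_meas: "(\<lambda>z. H (fst z) (snd z)) \<in> borel_measurable (M \<Otimes>\<^sub>M U01)"
  proof -
    define k2 where "k2 z v = (if \<gamma>b (fst z) v < \<infinity> then 1 else 0) * (Zp G (enn2real (\<gamma>b (fst z) v)) (fst z) *
            (if ennreal (enn2real (\<gamma>b (fst z) v)) < \<gamma>a (fst z) (snd z) then 1 else (0::real)))" for z v
    have "(\<lambda>w. k2 (fst w) (snd w)) \<in> borel_measurable ((M \<Otimes>\<^sub>M U01) \<Otimes>\<^sub>M U01)"
      unfolding k2_def by measurable
    then have "case_prod k2 \<in> borel_measurable ((M \<Otimes>\<^sub>M U01) \<Otimes>\<^sub>M U01)"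
      by (simp add: case_prod_beta')
    then have [measurable]: "(\<lambda>z. \<integral>v. k2 z v \<partial>U01) \<in> borel_measurable (M \<Otimes>\<^sub>M U01)"
      by (rule sigma_finite_measure.borel_measurable_lebesgue_integral[OF prob_space_imp_sigma_finite[OF prob_space_U01]])
    show ?thesis unfolding H_def hfun_def k2_def[symmetric] by measurable
  qed
  have H_meas': "(\<lambda>z. H (fst z) (snd z)) \<in> borel_measurable (P x \<Otimes>\<^sub>M U01)"
    using H_meas by (simp add: measurable_cong_sets[OF sPU refl])
  define Fm where "Fm \<omega> = innerC (cdfT (\<gamma>a \<omega>)) \<omega>" for \<omega>
  have F_meas: "Fm \<in> borel_measurable M"
  proof -
    define A' where "A' z = (if \<gamma>a (fst z) (snd z) < \<infinity> then 1 else 0) * (Zp R (enn2real (\<gamma>a (fst z) (snd z))) (fst z) *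
            measure U01 {v \<in> space U01. ennreal (enn2real (\<gamma>a (fst z) (snd z))) \<le> \<gamma>b (fst z) v})" for z
    define C' where "C' z = (if \<gamma>b (fst z) (snd z) < \<infinity> then 1 else 0) * (Zp G (enn2real (\<gamma>b (fst z) (snd z))) (fst z) *
            measure U01 {u \<in> space U01. ennreal (enn2real (\<gamma>b (fst z) (snd z))) < \<gamma>a (fst z) u})" for z
    have "A' \<in> borel_measurable (M \<Otimes>\<^sub>M U01)" unfolding A'_def by measurable
    then have "case_prod (\<lambda>\<omega> u. A' (\<omega>, u)) \<in> borel_measurable (M \<Otimes>\<^sub>M U01)" by simp
    then have [measurable]: "(\<lambda>\<omega>. \<integral>u. A' (\<omega>, u) \<partial>U01) \<in> borel_measurable M"
      by (rule sigma_finite_measure.borel_measurable_lebesgue_integral[OF prob_space_imp_sigma_finite[OF prob_space_U01]])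
    have "C' \<in> borel_measurable (M \<Otimes>\<^sub>M U01)" unfolding C'_def by measurable
    then have "case_prod (\<lambda>\<omega> u. C' (\<omega>, u)) \<in> borel_measurable (M \<Otimes>\<^sub>M U01)" by simp
    then have [measurable]: "(\<lambda>\<omega>. \<integral>u. C' (\<omega>, u) \<partial>U01) \<in> borel_measurable M"
      by (rule sigma_finite_measure.borel_measurable_lebesgue_integral[OF prob_space_imp_sigma_finite[OF prob_space_U01]])
    have meas: "(\<lambda>\<omega>. (\<integral>u. A' (\<omega>, u) \<partial>U01) + (\<integral>u. C' (\<omega>, u) \<partial>U01)) \<in> borel_measurable M" by measurable
    have eqF: "Fm \<omega> = (\<integral>u. A' (\<omega>, u) \<partial>U01) + (\<integral>u. C' (\<omega>, u) \<partial>U01)" if "\<omega> \<in> space M" for \<omega>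
      unfolding Fm_def inner_formula[OF that rst_meas_sec[OF rsta that]] A'_def C'_def by simp
    have "Fm \<in> borel_measurable M \<longleftrightarrow> (\<lambda>\<omega>. (\<integral>u. A' (\<omega>, u) \<partial>U01) + (\<integral>u. C' (\<omega>, u) \<partial>U01)) \<in> borel_measurable M"
      by (rule measurable_cong) (rule eqF)
    then show ?thesis using meas by blast
  qed
  have BRm: "BB R \<in> borel_measurable (P x)"
    using BB_meas[OF cR] by (simp add: measurable_cong_sets[OF sets_Px refl])
  have BGm: "BB G \<in> borel_measurable (P x)"
    using BB_meas[OF cG] by (simp add: measurable_cong_sets[OF sets_Px refl])
  have H_bound: "ennreal \<bar>H \<omega> u\<bar> \<le> BB R \<omega> + BB G \<omega>" if "\<omega> \<in> space M" for \<omega> u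
  proof (cases "BB R \<omega> < \<infinity> \<and> BB G \<omega> < \<infinity>")
    case True
    then have "\<bar>H \<omega> u\<bar> \<le> enn2real (BB R \<omega>) + enn2real (BB G \<omega>)"
      unfolding H_def using hfun_bound[OF that] by blast
    then have "ennreal \<bar>H \<omega> u\<bar> \<le> ennreal (enn2real (BB R \<omega>) + enn2real (BB G \<omega>))"
      by (rule ennreal_leI)
    also have "\<dots> = BB R \<omega> + BB G \<omega>"
      using True by (subst ennreal_plus) auto
    finally show ?thesis .
  next
    case False
    then have "BB R \<omega> + BB G \<omega> = \<top>" using less_top by fastforce
    then show ?thesis by (metis top_greatest)
  qed
  have H_int: "integrable (P x \<Otimes>\<^sub>M U01) (\<lambda>z. H (fst z) (snd z))"
    unfolding integrable_iff_bounded
  proof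
    show "(\<lambda>z. H (fst z) (snd z)) \<in> borel_measurable (P x \<Otimes>\<^sub>M U01)" by (rule H_meas')
    have "(\<integral>\<^sup>+z. ennreal (norm (H (fst z) (snd z))) \<partial>(P x \<Otimes>\<^sub>M U01))
        \<le> (\<integral>\<^sup>+z. BB R (fst z) + BB G (fst z) \<partial>(P x \<Otimes>\<^sub>M U01))"
      by (intro nn_integral_mono) (auto simp: space_pair_measure H_bound)
    also have "\<dots> = (\<integral>\<^sup>+\<omega>. \<integral>\<^sup>+u. BB R \<omega> + BB G \<omega> \<partial>U01 \<partial>P x)"
    proof -
      have "(\<lambda>z. BB R (fst z) + BB G (fst z)) \<in> borel_measurable (P x \<Otimes>\<^sub>M U01)"
        using BRm BGm by measurable
      from U.nn_integral_fst[OF this] show ?thesis by simp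
    qed
    also have "\<dots> = (\<integral>\<^sup>+\<omega>. BB R \<omega> + BB G \<omega> \<partial>P x)"
      by (simp add: U.emeasure_space_1)
    also have "\<dots> = (\<integral>\<^sup>+\<omega>. BB R \<omega> \<partial>P x) + (\<integral>\<^sup>+\<omega>. BB G \<omega> \<partial>P x)"
      by (rule nn_integral_add[OF BRm BGm])
    also have "\<dots> < \<infinity>" using BR_int BG_int by simp
    finally show "(\<integral>\<^sup>+z. ennreal (norm (H (fst z) (snd z))) \<partial>(P x \<Otimes>\<^sub>M U01)) < \<infinity>" .
  qed
  have H_int': "integrable (P x \<Otimes>\<^sub>M U01) (case_prod H)"
    using H_int by (simp add: case_prod_beta')
  have AEfin: "AE \<omega> in P x. BB R \<omega> \<noteq> \<infinity> \<and> BB G \<omega> \<noteq> \<infinity>"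
    using nn_integral_PInf_AE[OF BRm] nn_integral_PInf_AE[OF BGm] BR_int BG_int by auto
  have Hint_meas: "(\<lambda>\<omega>. \<integral>u. H \<omega> u \<partial>U01) \<in> borel_measurable (P x)"
  proof -
    have "case_prod H \<in> borel_measurable (P x \<Otimes>\<^sub>M U01)" using H_meas' by (simp add: case_prod_beta')
    then show ?thesis
      by (rule sigma_finite_measure.borel_measurable_lebesgue_integral[OF prob_space_imp_sigma_finite[OF prob_space_U01]])
  qed
  define \<phi> where "\<phi> u = payoff P X r R G x (pure_cdf (\<lambda>\<omega>. \<gamma>a \<omega> u)) (rst_cdf \<gamma>b)" for u
  have phi_eq: "(\<integral>\<omega>. H \<omega> u \<partial>P x) = \<phi> u" for u
    unfolding \<phi>_def payoff_eq pure_cdf_eq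
    by (intro Bochner_Integration.integral_cong refl) (simp add: pure_formula H_def)
  have "payoff P X r R G x (rst_cdf \<gamma>a) (rst_cdf \<gamma>b) = (\<integral>\<omega>. Fm \<omega> \<partial>P x)"
    unfolding payoff_eq rst_cdf_eq Fm_def ..
  also have "\<dots> = (\<integral>\<omega>. (\<integral>u. H \<omega> u \<partial>U01) \<partial>P x)"
  proof (rule integral_cong_AE)
    show "Fm \<in> borel_measurable (P x)" using F_meas by (simp add: measurable_cong_sets[OF sets_Px refl])
    show "(\<lambda>\<omega>. \<integral>u. H \<omega> u \<partial>U01) \<in> borel_measurable (P x)" by (rule Hint_meas)
    show "AE \<omega> in P x. Fm \<omega> = (\<integral>u. H \<omega> u \<partial>U01)"
      using AEfin AE_space[of "P x"]
    proof eventually_elim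
      case (elim \<omega>)
      then show ?case unfolding Fm_def H_def by (intro rst_formula) (auto simp: less_top)
    qed
  qed
  also have "\<dots> = (\<integral>u. (\<integral>\<omega>. H \<omega> u \<partial>P x) \<partial>U01)"
    by (rule PU.Fubini_integral[OF H_int', symmetric])
  also have "\<dots> = (\<integral>u. \<phi> u \<partial>U01)"
    by (simp add: phi_eq)
  finally have eq: "payoff P X r R G x (rst_cdf \<gamma>a) (rst_cdf \<gamma>b) = (\<integral>u. \<phi> u \<partial>U01)" .
  have phi_int: "integrable U01 \<phi>"
    using PU.integrable_snd[OF H_int'] by (simp add: phi_eq)
  define S where "S = (SUP \<tau>\<in>{\<tau>. stopping_time F \<tau>}. ereal (payoff P X r R G x (pure_cdf \<tau>) (rst_cdf \<gamma>b)))"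
  have AEst: "AE u in U01. stopping_time F (\<lambda>\<omega>. \<gamma>a \<omega> u)"
    using rsta unfolding randomized_stopping_time_def by blast
  then have AEle: "AE u in U01. ereal (\<phi> u) \<le> S"
    by eventually_elim (auto simp: S_def \<phi>_def intro: SUP_upper)
  have "ereal (\<integral>u. \<phi> u \<partial>U01) \<le> S"
  proof (cases S)
    case (real s)
    have "AE u in U01. \<phi> u \<le> s" using AEle by eventually_elim (simp add: real)
    then have "(\<integral>u. \<phi> u \<partial>U01) \<le> (\<integral>u. s \<partial>U01)"
      by (intro integral_mono_AE phi_int) auto
    also have "\<dots> = s" by (simp add: U.prob_space)
    finally show ?thesis by (simp add: real)
  next
    case PInf then show ?thesis by simp
  next
    case MInf
    have "AE u in U01. False" using AEle by eventually_elim (simp add: MInf)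
    then show ?thesis by (simp add: U.AE_False)
  qed
  then show ?thesis unfolding eq S_def .
qed

end



theorem lemma4:
  fixes M :: "'a measure" and F :: "ennreal \<Rightarrow> 'a measure" and P :: "real \<Rightarrow> 'a measure"
    and X :: "real \<Rightarrow> 'a \<Rightarrow> real" and I :: "real set" and r :: real
    and R1 G1 R2 G2 :: "real \<Rightarrow> real" and x :: real
    and \<gamma>1 \<gamma>2 :: "'a \<Rightarrow> real \<Rightarrow> ennreal"
  assumes I: "open I" "is_interval I" "I \<noteq> {}"
    and filt: "filtration (space M) F" "\<And>t. sets (F t) \<subseteq> sets M"
    and P: "\<And>y. y \<in> I \<Longrightarrow> prob_space (P y)" "\<And>y. y \<in> I \<Longrightarrow> sets (P y) = sets M"
    and adapted: "\<And>t. 0 \<le> t \<Longrightarrow> X t \<in> borel_measurable (F (ennreal t))"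
    and cont: "\<And>\<omega>. \<omega> \<in> space M \<Longrightarrow> continuous_on {0..} (\<lambda>t. X t \<omega>)"
    and range: "\<And>\<omega> t. \<omega> \<in> space M \<Longrightarrow> 0 \<le> t \<Longrightarrow> X t \<omega> \<in> I"
    and start: "\<And>y. y \<in> I \<Longrightarrow> AE \<omega> in P y. X 0 \<omega> = y"
    and r: "r > 0"
    and cR: "continuous_on I R1" "continuous_on I R2"
    and cG: "continuous_on I G1" "continuous_on I G2"
    and intR: "\<And>y. y \<in> I \<Longrightarrow> (\<integral>\<^sup>+\<omega>. (SUP t\<in>{0..}. ennreal (exp (- r * t) * \<bar>R1 (X t \<omega>)\<bar>)) \<partial>P y) < \<infinity>"
              "\<And>y. y \<in> I \<Longrightarrow> (\<integral>\<^sup>+\<omega>. (SUP t\<in>{0..}. ennreal (exp (- r * t) * \<bar>R2 (X t \<omega>)\<bar>)) \<partial>P y) < \<infinity>"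
    and intG: "\<And>y. y \<in> I \<Longrightarrow> (\<integral>\<^sup>+\<omega>. (SUP t\<in>{0..}. ennreal (exp (- r * t) * \<bar>G1 (X t \<omega>)\<bar>)) \<partial>P y) < \<infinity>"
              "\<And>y. y \<in> I \<Longrightarrow> (\<integral>\<^sup>+\<omega>. (SUP t\<in>{0..}. ennreal (exp (- r * t) * \<bar>G2 (X t \<omega>)\<bar>)) \<partial>P y) < \<infinity>"
    and x: "x \<in> I"
    and rst: "randomized_stopping_time F M \<gamma>1" "randomized_stopping_time F M \<gamma>2"
  shows "ereal (payoff P X r R1 G1 x (rst_cdf \<gamma>1) (rst_cdf \<gamma>2))
           \<le> (SUP \<tau>\<in>{\<tau>. stopping_time F \<tau>}. ereal (payoff P X r R1 G1 x (pure_cdf \<tau>) (rst_cdf \<gamma>2)))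
       \<and> ereal (payoff P X r R2 G2 x (rst_cdf \<gamma>2) (rst_cdf \<gamma>1))
           \<le> (SUP \<tau>\<in>{\<tau>. stopping_time F \<tau>}. ereal (payoff P X r R2 G2 x (pure_cdf \<tau>) (rst_cdf \<gamma>1)))"
  proof -
  interpret A: setting M F P X I r R1 G1 x \<gamma>1 \<gamma>2
    by (rule setting.intro[where M=M and F=F and P=P and X=X and I=I and r=r and R=R1 and G=G1 and x=x and \<gamma>a=\<gamma>1 and \<gamma>b=\<gamma>2, OF I(1) filt(1) filt(2) P(1)[OF x] P(2)[OF x] adapted cont range
          cR(1) cG(1) intR(1)[OF x] intG(1)[OF x] rst(1) rst(2)])
  interpret B: setting M F P X I r R2 G2 x \<gamma>2 \<gamma>1
    by (rule setting.intro[where M=M and F=F and P=P and X=X and I=I and r=r and R=R2 and G=G2 and x=x and \<gamma>a=\<gamma>2 and \<gamma>b=\<gamma>1, OF I(1) filt(1) filt(2) P(1)[OF x] P(2)[OF x] adapted cont range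
          cR(2) cG(2) intR(2)[OF x] intG(2)[OF x] rst(2) rst(1)])
  show ?thesis using A.main B.main by blast
qed

end
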